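(* Let $\sigma$ be an automorphism of $\mathcal{H}_N'$, or an automorphism of $\mathcal{H}_N$ with $\sigma(\mathcal{H}_N')=\mathcal{H}_N'$. Suppose that for every $\bm r\in\mathbb{Z}^N\setminus\{\bm 0\}$ there is $\bm s\in\mathbb{Z}^N\setminus\{\bm0\}$ with $\sigma(\mathbb{K}h_{\bm r})=\mathbb{K}h_{\bm s}$ and $\sigma(\mathbb{K}h_{-\bm r})=\mathbb{K}h_{-\bm s}$. Then there exist $\lambda=(\lambda_1,\dots,\lambda_N)\in(\mathbb{K}^\times)^N$ and $\bm Q\in\mathbf{GSp}_N(\mathbb{Z})$ such that for all $\bm r=(r_1,\dots,r_N)^\top\in\mathbb{Z}^N\setminus\{\bm0\}$, $$\sigma(D(\overline{\bm r},\bm r))=\begin{cases}\lambda^{\bm r}D(\bm Q^{-\top}\overline{\bm r},\bm Q\bm r), & \text{if } \bm Q^\top\bm J\bm Q=\bm J,\\ (-1)^{|\bm r|}\lambda^{\bm r}D(\bm Q^{-\top}\overline{\bm r},\bm Q\bm r), & \text{if } \bm Q^\top\bm J\bm Q=-\bm J,\end{cases}$$ where $\lambda^{\bm r}=\prod_i\lambda_i^{r_i}$ and $|\bm r|=\sum_i r_i$.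
   Context: $\mathbb{K}$ is an algebraically closed field of characteristic zero, $N=2m\ge2$ even, $(\cdot,\cdot)$ the bilinear form on $\mathbb{K}^N$ with $(e_i,e_j)=\delta_{ij}$. Let $A_N=\mathbb{K}[t_1^{\pm1},\dots,t_N^{\pm1}]$, $d_i=t_i\frac{\partial}{\partial t_i}$, $t^{\bm r}=t_1^{r_1}\cdots t_N^{r_N}$, $D(u,\bm r)=\sum_i u_it^{\bm r}d_i$ for $u\in\mathbb{K}^N$, $\bm r\in\mathbb{Z}^N$. Let $\bm J=\begin{pmatrix} O_m & I_m\\ -I_m & O_m\end{pmatrix}$, $\overline{\bm r}=\bm J\bm r$, $h_{\bm r}=D(\overline{\bm r},\bm r)$. The Hamiltonian Lie algebra is $\mathcal{H}_N=\operatorname{span}_{\mathbb{K}}\{h_{\bm r}:\bm r\ne\bm0\}\oplus\operatorname{span}_{\mathbb{K}}\{d_1,\dots,d_N\}$ (commutator bracket, $[h_{\bm r},h_{\bm s}]=(\overline{\bm r},\bm s)h_{\bm r+\bm s}$), and $\mathcal{H}_N'=\operatorname{span}_{\mathbb{K}}\{h_{\bm r}:\bm r\ne\bm0\}$ its derived subalgebra, whose degree-$\bm r$ component is $\mathbb{K}h_{\bm r}$. $\mathbf{GSp}_N(\mathbb{Z})=\{\bm Q\in\mathbf{GL}_N(\mathbb{Z}):\bm Q^\top\bm J\bm Q=\pm\bm J\}$; $\bm Q^{-\top}=(\bm Q^{-1})^\top$. *)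

theory Defs
  imports Main "HOL-Computational_Algebra.Polynomial"
begin

text \<open>Integer vectors of Z^N are functions nat => int vanishing at indices >= N;
K-vectors of K^N are functions nat => 'k (only indices < N are used).
An element of the Witt algebra W_N = Der(A_N) is a function
w :: (nat => int) => nat => 'k, where w r i is the coefficient of t^r d_i.\<close>

type_synonym 'k wel = "(nat \<Rightarrow> int) \<Rightarrow> nat \<Rightarrow> 'k"

definition Zn :: "nat \<Rightarrow> (nat \<Rightarrow> int) set" where
  "Zn N = {r. \<forall>i. N \<le> i \<longrightarrow> r i = 0}"

definition zerov :: "nat \<Rightarrow> int" where "zerov = (\<lambda>_. 0)"

definition vadd :: "(nat \<Rightarrow> int) \<Rightarrow> (nat \<Rightarrow> int) \<Rightarrow> nat \<Rightarrow> int" where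
  "vadd r s = (\<lambda>i. r i + s i)"

definition vneg :: "(nat \<Rightarrow> int) \<Rightarrow> nat \<Rightarrow> int" where
  "vneg r = (\<lambda>i. - r i)"

definition bil :: "nat \<Rightarrow> (nat \<Rightarrow> 'k::field) \<Rightarrow> (nat \<Rightarrow> 'k) \<Rightarrow> 'k" where
  "bil N u v = (\<Sum>i<N. u i * v i)"

definition ofi :: "(nat \<Rightarrow> int) \<Rightarrow> nat \<Rightarrow> 'k::field" where
  "ofi v = (\<lambda>i. of_int (v i))"

definition Dv :: "nat \<Rightarrow> (nat \<Rightarrow> 'k::field) \<Rightarrow> (nat \<Rightarrow> int) \<Rightarrow> 'k wel" where
  "Dv N u r = (\<lambda>s i. if s = r \<and> i < N then u i else 0)"

definition wadd :: "'k::field wel \<Rightarrow> 'k wel \<Rightarrow> 'k wel" where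
  "wadd x y = (\<lambda>s i. x s i + y s i)"

definition wscale :: "'k::field \<Rightarrow> 'k wel \<Rightarrow> 'k wel" where
  "wscale c x = (\<lambda>s i. c * x s i)"

definition wsupp :: "nat \<Rightarrow> 'k::field wel \<Rightarrow> (nat \<Rightarrow> int) set" where
  "wsupp N w = {r. \<exists>i<N. w r i \<noteq> 0}"

text \<open>Lie bracket of W_N:
 [D(u,r), D(v,s)] = D((u,s) v - (v,r) u, r + s), extended bilinearly.\<close>
definition wbr :: "nat \<Rightarrow> 'k::field wel \<Rightarrow> 'k wel \<Rightarrow> 'k wel" where
  "wbr N x y = (\<lambda>t i. \<Sum>p\<in>wsupp N x \<times> wsupp N y.
      if vadd (fst p) (snd p) = t \<and> i < N then
        bil N (x (fst p)) (ofi (snd p)) * y (snd p) i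
        - bil N (y (snd p)) (ofi (fst p)) * x (fst p) i
      else 0)"

text \<open>Integer N x N matrices as nat => nat => int (only indices < N used).\<close>
definition mvec :: "nat \<Rightarrow> (nat \<Rightarrow> nat \<Rightarrow> int) \<Rightarrow> (nat \<Rightarrow> int) \<Rightarrow> nat \<Rightarrow> int" where
  "mvec N A v = (\<lambda>i. if i < N then (\<Sum>j<N. A i j * v j) else 0)"

definition mmul :: "nat \<Rightarrow> (nat \<Rightarrow> nat \<Rightarrow> int) \<Rightarrow> (nat \<Rightarrow> nat \<Rightarrow> int) \<Rightarrow> nat \<Rightarrow> nat \<Rightarrow> int" where
  "mmul N A B = (\<lambda>i j. \<Sum>k<N. A i k * B k j)"

definition mtr :: "(nat \<Rightarrow> nat \<Rightarrow> int) \<Rightarrow> nat \<Rightarrow> nat \<Rightarrow> int" where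
  "mtr A = (\<lambda>i j. A j i)"

definition mid :: "nat \<Rightarrow> nat \<Rightarrow> int" where
  "mid = (\<lambda>i j. if i = j then 1 else 0)"

definition meq :: "nat \<Rightarrow> (nat \<Rightarrow> nat \<Rightarrow> int) \<Rightarrow> (nat \<Rightarrow> nat \<Rightarrow> int) \<Rightarrow> bool" where
  "meq N A B \<longleftrightarrow> (\<forall>i<N. \<forall>j<N. A i j = B i j)"

text \<open>J = [[0, I_m], [-I_m, 0]] (size 2m).\<close>
definition Jmat :: "nat \<Rightarrow> nat \<Rightarrow> nat \<Rightarrow> int" where
  "Jmat m = (\<lambda>i j. if i < m \<and> j = i + m then 1
                   else if m \<le> i \<and> i < 2*m \<and> j + m = i then -1 else 0)"

definition mneg :: "(nat \<Rightarrow> nat \<Rightarrow> int) \<Rightarrow> nat \<Rightarrow> nat \<Rightarrow> int" where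
  "mneg A = (\<lambda>i j. - A i j)"

definition is_inv :: "nat \<Rightarrow> (nat \<Rightarrow> nat \<Rightarrow> int) \<Rightarrow> (nat \<Rightarrow> nat \<Rightarrow> int) \<Rightarrow> bool" where
  "is_inv N Q P \<longleftrightarrow> meq N (mmul N Q P) mid \<and> meq N (mmul N P Q) mid"

definition GSp :: "nat \<Rightarrow> (nat \<Rightarrow> nat \<Rightarrow> int) set" where
  "GSp m = {Q. (\<exists>P. is_inv (2*m) Q P) \<and>
     (meq (2*m) (mmul (2*m) (mmul (2*m) (mtr Q) (Jmat m)) Q) (Jmat m) \<or>
      meq (2*m) (mmul (2*m) (mmul (2*m) (mtr Q) (Jmat m)) Q) (mneg (Jmat m)))}"

definition rbar :: "nat \<Rightarrow> (nat \<Rightarrow> int) \<Rightarrow> nat \<Rightarrow> int" where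
  "rbar m r = mvec (2*m) (Jmat m) r"

definition hv :: "nat \<Rightarrow> (nat \<Rightarrow> int) \<Rightarrow> 'k::field wel" where
  "hv m r = Dv (2*m) (ofi (rbar m r)) r"

definition dd :: "nat \<Rightarrow> nat \<Rightarrow> 'k::field wel" where
  "dd N j = Dv N (\<lambda>k. if k = j then 1 else 0) zerov"

text \<open>H_N' = span {h_r : r <> 0}, H_N = H_N' + span {d_1..d_N}.\<close>
definition Hder :: "nat \<Rightarrow> 'k::field wel set" where
  "Hder m = {(\<lambda>s i. \<Sum>r\<in>F. c r * hv m r s i) | F c.
               finite F \<and> F \<subseteq> Zn (2*m) - {zerov}}"

definition Ham :: "nat \<Rightarrow> 'k::field wel set" where
  "Ham m = {(\<lambda>s i. x s i + (\<Sum>j<2*m. a j * dd (2*m) j s i)) | x a. x \<in> Hder m}"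

definition lie_aut :: "nat \<Rightarrow> 'k::field wel set \<Rightarrow> ('k wel \<Rightarrow> 'k wel) \<Rightarrow> bool" where
  "lie_aut N L \<sigma> \<longleftrightarrow> bij_betw \<sigma> L L \<and>
     (\<forall>x\<in>L. \<forall>y\<in>L. \<sigma> (wadd x y) = wadd (\<sigma> x) (\<sigma> y)) \<and>
     (\<forall>c. \<forall>x\<in>L. \<sigma> (wscale c x) = wscale c (\<sigma> x)) \<and>
     (\<forall>x\<in>L. \<forall>y\<in>L. \<sigma> (wbr N x y) = wbr N (\<sigma> x) (\<sigma> y))"

definition kline :: "'k::field wel \<Rightarrow> 'k wel set" where
  "kline w = {wscale c w | c. True}"

definition lpow :: "nat \<Rightarrow> (nat \<Rightarrow> 'k::field) \<Rightarrow> (nat \<Rightarrow> int) \<Rightarrow> 'k" where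
  "lpow N l r = (\<Prod>i<N. l i powi r i)"

definition vabs :: "nat \<Rightarrow> (nat \<Rightarrow> int) \<Rightarrow> int" where
  "vabs N r = (\<Sum>i<N. r i)"

end

theory Submission
  imports Defs "HOL-Library.Function_Algebras"
begin
definition ee :: "nat \<Rightarrow> nat \<Rightarrow> int" where "ee j = (\<lambda>i. if i = j then 1 else 0)"

definition om :: "nat \<Rightarrow> (nat \<Rightarrow> int) \<Rightarrow> (nat \<Rightarrow> int) \<Rightarrow> int" where
  "om m r s = (\<Sum>i<m. r (i+m) * s i - r i * s (i+m))"

lemma zerov_eq: "zerov = 0" by (simp add: zerov_def zero_fun_def)
lemma vadd_eq: "vadd r s = r + s" by (simp add: vadd_def plus_fun_def)
lemma vneg_eq: "vneg r = - r" by (simp add: vneg_def fun_Compl_def)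

lemma Zn_add: "r \<in> Zn N \<Longrightarrow> s \<in> Zn N \<Longrightarrow> r + s \<in> Zn N" by (simp add: Zn_def)
lemma Zn_neg: "r \<in> Zn N \<Longrightarrow> - r \<in> Zn N" by (simp add: Zn_def)
lemma Zn_diff: "r \<in> Zn N \<Longrightarrow> s \<in> Zn N \<Longrightarrow> r - s \<in> Zn N" by (simp add: Zn_def)
lemma Zn_0: "0 \<in> Zn N" by (simp add: Zn_def)
lemma Zn_ee: "j < N \<Longrightarrow> ee j \<in> Zn N" by (simp add: Zn_def ee_def)

lemma om_add1: "om m (r + r') s = om m r s + om m r' s"
  by (simp add: om_def sum.distrib[symmetric] algebra_simps)
lemma om_add2: "om m s (r + r') = om m s r + om m s r'"
  by (simp add: om_def sum.distrib[symmetric] algebra_simps)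
lemma om_neg1: "om m (- r) s = - om m r s"
  by (simp add: om_def sum_negf[symmetric] algebra_simps)
lemma om_neg2: "om m s (- r) = - om m s r"
  by (simp add: om_def sum_negf[symmetric] algebra_simps)
lemma om_self: "om m r r = 0"
  by (simp add: om_def algebra_simps)
lemma om_anti: "om m s r = - om m r s"
  by (simp add: om_def sum_negf[symmetric] algebra_simps)
lemma om_01: "om m 0 s = 0" by (simp add: om_def)
lemma om_02: "om m s 0 = 0" by (simp add: om_def)
lemma om_nz: "om m r s \<noteq> 0 \<Longrightarrow> r \<noteq> 0 \<and> s \<noteq> 0 \<and> r + s \<noteq> 0"
proof -
  assume a: "om m r s \<noteq> 0"
  have "r + s \<noteq> 0"
  proof
    assume "r + s = 0" hence "s = - r" by (metis minus_unique)
    thus False using a by (simp add: om_neg2 om_self)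
  qed
  thus ?thesis using a by (auto simp: om_01 om_02)
qed

lemma sum_delta_and: "finite A \<Longrightarrow> (\<Sum>i\<in>A. if i = b \<and> P i then (c::'a::comm_monoid_add) else 0) = (if b \<in> A \<and> P b then c else 0)"
proof -
  assume "finite A"
  have "(\<Sum>i\<in>A. if i = b \<and> P i then c else 0) = (\<Sum>i\<in>A. if i = b then (if P i then c else 0) else 0)"
    by (rule sum.cong) auto
  also have "\<dots> = (if b \<in> A \<and> P b then c else 0)" using \<open>finite A\<close> by (simp add: sum.delta)
  finally show ?thesis .
qed

lemma om_ee: "om m (ee a) (ee b) =
   (if m \<le> a \<and> a < 2*m \<and> b + m = a then 1 else if a < m \<and> b = a + m then -1 else 0)"
proof -
  have "om m (ee a) (ee b) = (\<Sum>i<m. (if i = b \<and> i + m = a then 1 else 0)) - (\<Sum>i<m. (if i = a \<and> i + m = b then 1 else 0))"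
    unfolding om_def sum_subtractf[symmetric] by (rule sum.cong) (auto simp: ee_def)
  also have "\<dots> = (if m \<le> a \<and> a < 2*m \<and> b + m = a then 1 else if a < m \<and> b = a + m then -1 else 0)"
    by (simp only: sum_delta_and finite_lessThan) auto
  finally show ?thesis .
qed

definition tt :: "nat \<Rightarrow> int \<Rightarrow> nat \<Rightarrow> int" where
  "tt m n = (\<lambda>i. if i < 2*m then n^(i+1) else 0)"

definition pp :: "nat \<Rightarrow> (nat \<Rightarrow> int) \<Rightarrow> int poly" where
  "pp m a = (\<Sum>i<m. monom (a(i+m)) (i+1) - monom (a i) (i+m+1))"

lemma tt_Zn: "tt m n \<in> Zn (2*m)" by (simp add: Zn_def tt_def)

lemma poly_pp: "poly (pp m a) n = om m a (tt m n)"
  unfolding pp_def om_def tt_def poly_sum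
  by (rule sum.cong) (auto simp: poly_monom algebra_simps)

lemma coeff_pp: "coeff (pp m a) (Suc k) = (if k < m then a (k+m) else 0) - (if m \<le> k \<and> k < 2*m then a (k - m) else 0)"
proof -
  have "coeff (pp m a) (Suc k) = (\<Sum>i<m. if i = k \<and> True then a (i+m) else 0) - (\<Sum>i<m. if i = k - m \<and> m \<le> k then a i else 0)"
    unfolding pp_def coeff_sum sum_subtractf[symmetric] coeff_diff coeff_monom
    by (rule sum.cong) auto
  also have "\<dots> = (if k < m then a (k+m) else 0) - (if m \<le> k \<and> k < 2*m then a (k - m) else 0)"
    by (simp add: sum_delta_and sum.delta) auto
  finally show ?thesis .
qed

lemma Zn_nz: "a \<in> Zn N \<Longrightarrow> a \<noteq> 0 \<Longrightarrow> \<exists>j<N. a j \<noteq> 0"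
  by (auto simp: Zn_def fun_eq_iff) (meson not_le)

lemma pp_nconst: assumes "a \<in> Zn (2*m)" "a \<noteq> 0" shows "pp m a - [:c:] \<noteq> 0"
proof -
  obtain j where j: "j < 2*m" "a j \<noteq> 0" using Zn_nz[OF assms] by auto
  have "\<exists>k. coeff (pp m a) (Suc k) \<noteq> 0"
  proof (cases "j < m")
    case True
    then show ?thesis using j by (intro exI[of _ "j+m"]) (simp add: coeff_pp)
  next
    case False
    then show ?thesis using j by (intro exI[of _ "j-m"]) (auto simp add: coeff_pp)
  qed
  then obtain k where "coeff (pp m a) (Suc k) \<noteq> 0" by auto
  hence "coeff (pp m a - [:c:]) (Suc k) \<noteq> 0" by simp
  thus ?thesis by auto
qed

lemma avoid:
  assumes "finite B" "\<forall>(a,c)\<in>B. a \<in> Zn (2*m) \<and> a \<noteq> 0"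
  shows "\<exists>t\<in>Zn (2*m). \<forall>(a,c)\<in>B. om m a t \<noteq> c"
proof -
  let ?S = "\<Union>(a,c)\<in>B. {n. poly (pp m a - [:c:]) n = 0}"
  have "finite ?S"
  proof (rule finite_UN_I[OF assms(1)], clarify)
    fix a c assume "(a,c) \<in> B"
    hence "pp m a - [:c:] \<noteq> 0" using assms(2) pp_nconst by blast
    thus "finite {n. poly (pp m a - [:c:]) n = 0}" by (rule poly_roots_finite)
  qed
  then obtain n where "n \<notin> ?S" using ex_new_if_finite[OF infinite_UNIV_int] by blast
  hence "\<forall>(a,c)\<in>B. om m a (tt m n) \<noteq> c" by (auto simp: poly_pp)
  thus ?thesis using tt_Zn by blast
qed

abbreviation VV :: "nat \<Rightarrow> (nat \<Rightarrow> int) set" where "VV m \<equiv> Zn (2*m) - {0}"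

lemma add_ext:
  fixes f :: "(nat \<Rightarrow> int) \<Rightarrow> 'a::ab_group_add"
  assumes h: "\<And>r s. r \<in> VV m \<Longrightarrow> s \<in> VV m \<Longrightarrow> om m r s \<noteq> 0 \<Longrightarrow> f (r+s) = f r + f s"
    and n: "\<And>r. r \<in> VV m \<Longrightarrow> f (-r) = - f r"
    and z: "f 0 = 0"
    and r: "r \<in> Zn (2*m)" and s: "s \<in> Zn (2*m)"
  shows "f (r+s) = f r + f s"
proof -
  consider "r = 0" | "s = 0" | "r + s = 0" | "r \<noteq> 0" "s \<noteq> 0" "r + s \<noteq> 0" by blast
  then show ?thesis
  proof cases
    case 3
    hence "s = - r" by (metis minus_unique)
    thus ?thesis using n[of r] r z by (cases "r = 0") auto
  next
    case 4
    have rs: "r + s \<in> Zn (2*m)" using r s Zn_add by blast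
    obtain t where t: "t \<in> Zn (2*m)" "\<forall>(a,c)\<in>{(r+s,0),(s,0),(r,- om m r s)}. om m a t \<noteq> c"
      using avoid[of "{(r+s,0),(s,0),(r,- om m r s)}" m] 4 r s rs by auto
    hence t1: "om m (r+s) t \<noteq> 0" and t2: "om m s t \<noteq> 0" and t3: "om m r (s + t) \<noteq> 0"
      by (auto simp: om_add2)
    have "t \<noteq> 0" "s + t \<noteq> 0" using om_nz[OF t1] om_nz[OF t2] by auto
    have st: "s + t \<in> Zn (2*m)" using s t Zn_add by blast
    have v: "r + s \<in> VV m" "t \<in> VV m" "s \<in> VV m" "r \<in> VV m" "s + t \<in> VV m"
      using 4 rs t(1) \<open>t\<noteq>0\<close> \<open>s+t\<noteq>0\<close> st r s by auto
    have "f ((r+s)+t) = f (r+s) + f t" by (rule h[OF v(1,2) t1])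
    moreover have "f (s+t) = f s + f t" by (rule h[OF v(3,2) t2])
    moreover have "f (r+(s+t)) = f r + f (s+t)" by (rule h[OF v(4,5) t3])
    ultimately show ?thesis by (simp add: add.assoc)
  qed (auto simp: z)
qed

lemma mult_ext:
  fixes f :: "(nat \<Rightarrow> int) \<Rightarrow> 'a::field"
  assumes h: "\<And>r s. r \<in> VV m \<Longrightarrow> s \<in> VV m \<Longrightarrow> om m r s \<noteq> 0 \<Longrightarrow> f (r+s) = f r * f s"
    and nz: "\<And>r. r \<in> VV m \<Longrightarrow> f r \<noteq> 0"
    and z: "f 0 = 1"
    and r: "r \<in> Zn (2*m)" and s: "s \<in> Zn (2*m)"
  shows "f (r+s) = f r * f s"
proof -
  have n: "f r * f (-r) = 1" if r: "r \<in> VV m" for r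
  proof -
    obtain t where t: "t \<in> Zn (2*m)" "\<forall>(a,c)\<in>{(r,0)}. om m a t \<noteq> c"
      using avoid[of "{(r,0)}" m] r by blast
    have t0: "om m r t \<noteq> 0" using t(2) by blast
    have e1: "om m r (t - r) = om m r t"
      unfolding diff_conv_add_uminus om_add2 om_neg2 om_self by simp
    have e2: "om m (-r) t = - om m r t" by (rule om_neg1)
    have t1: "om m r (t - r) \<noteq> 0" using e1 t0 by simp
    have t2: "om m (-r) t \<noteq> 0" using e2 t0 by simp
    have "t \<noteq> 0" "t - r \<noteq> 0" using om_nz[OF t1] om_nz[OF t2] by auto
    have tr: "t - r \<in> Zn (2*m)" using r t Zn_diff by blast
    have v: "t - r \<in> VV m" "t \<in> VV m" "- r \<in> VV m" using r tr t(1) \<open>t - r \<noteq> 0\<close> \<open>t \<noteq> 0\<close> Zn_neg by auto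
    have "f (r + (t - r)) = f r * f (t - r)" by (rule h[OF r v(1) t1])
    moreover have "f (-r + t) = f (-r) * f t" by (rule h[OF v(3,2) t2])
    moreover have "r + (t - r) = t" by (metis add.commute diff_add_cancel)
    moreover have "-r + t = t - r" by (metis add.commute diff_conv_add_uminus)
    ultimately have "f t = f r * (f (-r) * f t)" by simp
    hence "f t * (f r * f (-r)) = f t * 1" by (simp add: ac_simps)
    thus ?thesis by (rule mult_left_cancel[OF nz[OF v(2)], THEN iffD1])
  qed
  consider "r = 0" | "s = 0" | "r + s = 0" | "r \<noteq> 0" "s \<noteq> 0" "r + s \<noteq> 0" by blast
  then show ?thesis
  proof cases
    case 3
    hence "s = - r" by (metis minus_unique)
    thus ?thesis using n[of r] r z by (cases "r = 0") auto
  next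
    case 4
    have rs: "r + s \<in> Zn (2*m)" using r s Zn_add by blast
    obtain t where t: "t \<in> Zn (2*m)" "\<forall>(a,c)\<in>{(r+s,0),(s,0),(r,- om m r s)}. om m a t \<noteq> c"
      using avoid[of "{(r+s,0),(s,0),(r,- om m r s)}" m] 4 r s rs by auto
    hence t1: "om m (r+s) t \<noteq> 0" and t2: "om m s t \<noteq> 0" and t3: "om m r (s + t) \<noteq> 0"
      by (auto simp: om_add2)
    have "t \<noteq> 0" "s + t \<noteq> 0" using om_nz[OF t1] om_nz[OF t2] by auto
    have st: "s + t \<in> Zn (2*m)" using s t Zn_add by blast
    have v: "r + s \<in> VV m" "t \<in> VV m" "s \<in> VV m" "r \<in> VV m" "s + t \<in> VV m"
      using 4 rs t(1) \<open>t\<noteq>0\<close> \<open>s+t\<noteq>0\<close> st r s by auto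
    have "f t * f (r+s) = f ((r+s)+t)" using h[OF v(1,2) t1] by (simp add: mult.commute)
    also have "\<dots> = f (r+(s+t))" by (simp only: add.assoc)
    also have "\<dots> = f r * f (s+t)" by (rule h[OF v(4,5) t3])
    also have "\<dots> = f t * (f r * f s)" using h[OF v(3,2) t2] by (simp only: ac_simps)
    finally have "f t * f (r+s) = f t * (f r * f s)" .
    thus ?thesis by (rule mult_left_cancel[OF nz[OF v(2)], THEN iffD1])
  qed (auto simp: z)
qed

definition smul :: "int \<Rightarrow> (nat \<Rightarrow> int) \<Rightarrow> nat \<Rightarrow> int" where "smul k x = (\<lambda>i. k * x i)"
definition trn :: "nat \<Rightarrow> (nat \<Rightarrow> int) \<Rightarrow> nat \<Rightarrow> int" where "trn n r = (\<lambda>i. if i < n then r i else 0)"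

lemma Zn_smul: "x \<in> Zn N \<Longrightarrow> smul k x \<in> Zn N" by (simp add: Zn_def smul_def)
lemma Zn_trn: "n \<le> N \<Longrightarrow> trn n r \<in> Zn N" by (simp add: Zn_def trn_def)
lemma trn_Suc: "trn (Suc n) r = trn n r + smul (r n) (ee n)"
  by (auto simp: trn_def smul_def ee_def fun_eq_iff less_Suc_eq)
lemma trn_0: "trn 0 r = 0" by (simp add: trn_def fun_eq_iff)
lemma trn_full: "r \<in> Zn N \<Longrightarrow> trn N r = r" by (auto simp: trn_def Zn_def fun_eq_iff)
lemma smul_0: "smul 0 x = 0" by (simp add: smul_def fun_eq_iff)
lemma smul_plus1: "smul (i+1) x = smul i x + x" by (simp add: smul_def fun_eq_iff algebra_simps)
lemma smul_minus1: "smul i x = smul (i - 1) x + x" by (simp add: smul_def fun_eq_iff algebra_simps)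

lemma lin_ext:
  fixes f :: "(nat \<Rightarrow> int) \<Rightarrow> int"
  assumes h: "\<And>r s. r \<in> Zn N \<Longrightarrow> s \<in> Zn N \<Longrightarrow> f (r+s) = f r + f s"
    and r: "r \<in> Zn N"
  shows "f r = (\<Sum>j<N. r j * f (ee j))"
proof -
  have z: "f 0 = 0" using h[of 0 0] Zn_0 by simp
  have sm: "f (smul k x) = k * f x" if x: "x \<in> Zn N" for k x
  proof (induction k rule: int_induct[of _ 0])
    case base then show ?case using z by (simp add: smul_0 zero_fun_def)
  next
    case (step1 i)
    have "f (smul (i+1) x) = f (smul i x) + f x" unfolding smul_plus1 using h[of "smul i x" x] x Zn_smul by blast
    then show ?case using step1 by (simp add: algebra_simps)
  next
    case (step2 i)
    have "f (smul i x) = f (smul (i - 1) x) + f x" apply (subst smul_minus1) using h[of "smul (i - 1) x" x] x Zn_smul by blast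
    then show ?case using step2 by (simp add: algebra_simps)
  qed
  have "n \<le> N \<Longrightarrow> f (trn n r) = (\<Sum>j<n. r j * f (ee j))" for n
  proof (induction n)
    case 0 then show ?case using z by (simp add: trn_0 zero_fun_def)
  next
    case (Suc n)
    have "f (trn (Suc n) r) = f (trn n r) + f (smul (r n) (ee n))"
      unfolding trn_Suc using Suc.prems by (intro h Zn_trn Zn_smul Zn_ee) auto
    then show ?case using Suc sm[of "ee n" "r n"] Zn_ee[of n N] by simp
  qed
  thus ?thesis using trn_full[OF r] by (metis order_refl)
qed

lemma mult_lin_ext:
  fixes f :: "(nat \<Rightarrow> int) \<Rightarrow> 'a::field"
  assumes h: "\<And>r s. r \<in> Zn N \<Longrightarrow> s \<in> Zn N \<Longrightarrow> f (r+s) = f r * f s"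
    and nz: "\<And>r. r \<in> Zn N \<Longrightarrow> f r \<noteq> 0"
    and r: "r \<in> Zn N"
  shows "f r = (\<Prod>j<N. f (ee j) powi r j)"
proof -
  have z: "f 0 = 1" using h[of 0 0] Zn_0 nz[of 0] by simp
  have sm: "f (smul k x) = f x powi k" if x: "x \<in> Zn N" for k x
  proof (induction k rule: int_induct[of _ 0])
    case base then show ?case using z by (simp add: smul_0 zero_fun_def)
  next
    case (step1 i)
    have "f (smul (i+1) x) = f (smul i x) * f x" unfolding smul_plus1 using h[of "smul i x" x] x Zn_smul by blast
    then show ?case using step1 nz[OF x] by (simp add: power_int_add_1)
  next
    case (step2 i)
    have "f (smul i x) = f (smul (i - 1) x) * f x" apply (subst smul_minus1) using h[of "smul (i - 1) x" x] x Zn_smul by blast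
    hence "f x powi i = f (smul (i - 1) x) * f x" using step2 by simp
    then show ?case using nz[OF x] by (simp add: power_int_diff)
  qed
  have "n \<le> N \<Longrightarrow> f (trn n r) = (\<Prod>j<n. f (ee j) powi r j)" for n
  proof (induction n)
    case 0 then show ?case using z by (simp add: trn_0 zero_fun_def)
  next
    case (Suc n)
    have "f (trn (Suc n) r) = f (trn n r) * f (smul (r n) (ee n))"
      unfolding trn_Suc using Suc.prems by (intro h Zn_trn Zn_smul Zn_ee) auto
    then show ?case using Suc sm[of "ee n" "r n"] Zn_ee[of n N] by simp
  qed
  thus ?thesis using trn_full[OF r] by (metis order_refl)
qed

lemma om_diff2: "om m s (r - r') = om m s r - om m s r'"
  by (simp add: om_def sum_subtractf[symmetric] algebra_simps)
lemma om_diff1: "om m (r - r') s = om m r s - om m r' s"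
  by (simp add: om_def sum_subtractf[symmetric] algebra_simps)

lemma bil_expand:
  fixes F :: "(nat \<Rightarrow> int) \<Rightarrow> (nat \<Rightarrow> int) \<Rightarrow> int"
  assumes h1: "\<And>r r' s. r \<in> Zn N \<Longrightarrow> r' \<in> Zn N \<Longrightarrow> s \<in> Zn N \<Longrightarrow> F (r+r') s = F r s + F r' s"
    and h2: "\<And>r s s'. r \<in> Zn N \<Longrightarrow> s \<in> Zn N \<Longrightarrow> s' \<in> Zn N \<Longrightarrow> F r (s+s') = F r s + F r s'"
    and r: "r \<in> Zn N" and s: "s \<in> Zn N"
  shows "F r s = (\<Sum>a<N. r a * (\<Sum>b<N. s b * F (ee a) (ee b)))"
proof -
  have "F r s = (\<Sum>a<N. r a * F (ee a) s)"
    using lin_ext[of N "\<lambda>r. F r s" r] h1 s r by blast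
  also have "\<dots> = (\<Sum>a<N. r a * (\<Sum>b<N. s b * F (ee a) (ee b)))"
  proof (rule sum.cong[OF refl])
    fix a assume "a \<in> {..<N}"
    hence "ee a \<in> Zn N" by (simp add: Zn_ee)
    thus "r a * F (ee a) s = r a * (\<Sum>b<N. s b * F (ee a) (ee b))"
      using lin_ext[of N "\<lambda>s. F (ee a) s" s] h2 s by simp
  qed
  finally show ?thesis .
qed

lemma bil_eq:
  fixes F G :: "(nat \<Rightarrow> int) \<Rightarrow> (nat \<Rightarrow> int) \<Rightarrow> int"
  assumes h1: "\<And>r r' s. r \<in> Zn N \<Longrightarrow> r' \<in> Zn N \<Longrightarrow> s \<in> Zn N \<Longrightarrow> F (r+r') s = F r s + F r' s"
    and h2: "\<And>r s s'. r \<in> Zn N \<Longrightarrow> s \<in> Zn N \<Longrightarrow> s' \<in> Zn N \<Longrightarrow> F r (s+s') = F r s + F r s'"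
    and g1: "\<And>r r' s. r \<in> Zn N \<Longrightarrow> r' \<in> Zn N \<Longrightarrow> s \<in> Zn N \<Longrightarrow> G (r+r') s = G r s + G r' s"
    and g2: "\<And>r s s'. r \<in> Zn N \<Longrightarrow> s \<in> Zn N \<Longrightarrow> s' \<in> Zn N \<Longrightarrow> G r (s+s') = G r s + G r s'"
    and e: "\<And>a b. a < N \<Longrightarrow> b < N \<Longrightarrow> F (ee a) (ee b) = G (ee a) (ee b)"
    and r: "r \<in> Zn N" and s: "s \<in> Zn N"
  shows "F r s = G r s"
  using bil_expand[of N F r s, OF h1 h2 r s] bil_expand[of N G r s, OF g1 g2 r s] e by simp

lemma sympl_scalar:
  fixes \<Phi> :: "(nat \<Rightarrow> int) \<Rightarrow> (nat \<Rightarrow> int)"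
  assumes add: "\<And>r s. r \<in> Zn (2*m) \<Longrightarrow> s \<in> Zn (2*m) \<Longrightarrow> \<Phi> (r+s) = \<Phi> r + \<Phi> s"
    and zero: "\<And>r s. r \<in> Zn (2*m) \<Longrightarrow> s \<in> Zn (2*m) \<Longrightarrow> om m r s = 0 \<Longrightarrow> om m (\<Phi> r) (\<Phi> s) = 0"
    and m: "m \<ge> 1"
    and r: "r \<in> Zn (2*m)" and s: "s \<in> Zn (2*m)"
  shows "om m (\<Phi> r) (\<Phi> s) = om m (\<Phi> (ee m)) (\<Phi> (ee 0)) * om m r s"
proof -
  define B where "B = (\<lambda>r s. om m (\<Phi> r) (\<Phi> s))"
  define \<mu> where "\<mu> = B (ee m) (ee 0)"
  have b1: "B (r+r') s = B r s + B r' s" if "r \<in> Zn (2*m)" "r' \<in> Zn (2*m)" "s \<in> Zn (2*m)" for r r' s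
    unfolding B_def using that by (simp add: add om_add1)
  have b2: "B r (s+s') = B r s + B r s'" if "r \<in> Zn (2*m)" "s \<in> Zn (2*m)" "s' \<in> Zn (2*m)" for r s s'
    unfolding B_def using that by (simp add: add om_add2)
  have bz: "B r s = 0" if "r \<in> Zn (2*m)" "s \<in> Zn (2*m)" "om m r s = 0" for r s
    unfolding B_def using that zero by blast
  have bd2: "B r (s - s') = B r s - B r s'" if "r \<in> Zn (2*m)" "s \<in> Zn (2*m)" "s' \<in> Zn (2*m)" for r s s'
  proof -
    have "B r s = B r ((s - s') + s')" by simp
    also have "\<dots> = B r (s - s') + B r s'" using b2 that Zn_diff by blast
    finally show ?thesis by simp
  qed
  have anti: "B r s = - B s r" if "r \<in> Zn (2*m)" "s \<in> Zn (2*m)" for r s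
  proof -
    have rs: "r + s \<in> Zn (2*m)" using that Zn_add by blast
    have "0 = B (r+s) (r+s)" using bz[OF rs rs] om_self by simp
    also have "\<dots> = B r r + B r s + (B s r + B s s)" using b1 b2 that rs by simp
    also have "\<dots> = B r s + B s r" using bz that om_self by simp
    finally show ?thesis by simp
  qed
  have diag: "B (ee (i+m)) (ee i) = \<mu>" if i: "i < m" for i
  proof (cases "i = 0")
    case True then show ?thesis by (simp add: \<mu>_def)
  next
    case False
    have z: "ee (i+m) \<in> Zn (2*m)" "ee m \<in> Zn (2*m)" "ee i \<in> Zn (2*m)" "ee 0 \<in> Zn (2*m)"
      using i m by (auto intro!: Zn_ee)
    have "om m (ee (i+m) + ee m) (ee i - ee 0) = 0"
      using False i m by (simp add: om_add1 om_diff2 om_ee)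
    hence "B (ee (i+m) + ee m) (ee i - ee 0) = 0" by (rule bz[OF Zn_add[OF z(1,2)] Zn_diff[OF z(3,4)]])
    moreover have "B (ee (i+m) + ee m) (ee i - ee 0) = B (ee (i+m)) (ee i) - B (ee (i+m)) (ee 0) + (B (ee m) (ee i) - B (ee m) (ee 0))"
      unfolding b1[OF z(1,2) Zn_diff[OF z(3,4)]] bd2[OF z(1,3,4)] bd2[OF z(2,3,4)] ..
    moreover have "B (ee (i+m)) (ee 0) = 0" using False by (intro bz[OF z(1,4)]) (simp add: om_ee)
    moreover have "B (ee m) (ee i) = 0" using False by (intro bz[OF z(2,3)]) (simp add: om_ee)
    ultimately show ?thesis by (simp add: \<mu>_def)
  qed
  have "B r s = \<mu> * om m r s"
  proof (rule bil_eq[of "2*m" B "\<lambda>r s. \<mu> * om m r s", OF b1 b2 _ _ _ r s])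
    show "\<mu> * om m (r + r') s = \<mu> * om m r s + \<mu> * om m r' s" for r r' s by (simp add: om_add1 algebra_simps)
    show "\<mu> * om m r (s + s') = \<mu> * om m r s + \<mu> * om m r s'" for r s s' by (simp add: om_add2 algebra_simps)
    fix a b assume ab: "a < 2*m" "b < 2*m"
    have z: "ee a \<in> Zn (2*m)" "ee b \<in> Zn (2*m)" using ab by (auto intro!: Zn_ee)
    consider "m \<le> a \<and> b + m = a" | "a < m \<and> b = a + m" | "\<not> (m \<le> a \<and> b + m = a)" "\<not> (a < m \<and> b = a + m)" by blast
    then show "B (ee a) (ee b) = \<mu> * om m (ee a) (ee b)"
    proof cases
      case 1 then show ?thesis using diag[of b] ab by (auto simp: om_ee)
    next
      case 2 then show ?thesis using diag[of a] ab anti[OF z] by (auto simp: om_ee)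
    next
      case 3 then show ?thesis using bz[OF z] by (auto simp: om_ee)
    qed
  qed
  thus ?thesis by (simp add: B_def \<mu>_def)
qed

lemma sum_split2: "(\<Sum>i<2*m. (g :: nat \<Rightarrow> 'a::comm_monoid_add) i) = (\<Sum>i<m. g i) + (\<Sum>i<m. g (i+m))"
proof -
  have e: "{..<2*m} = {..<m} \<union> {m..<2*m}" by auto
  have "(\<Sum>i<2*m. g i) = (\<Sum>i<m. g i) + (\<Sum>i\<in>{m..<2*m}. g i)"
    unfolding e by (rule sum.union_disjoint) auto
  also have "(\<Sum>i\<in>{m..<2*m}. g i) = (\<Sum>i\<in>{0..<m}. g (i+m))"
    using sum.shift_bounds_nat_ivl[of g 0 m m] by (simp add: mult_2)
  finally show ?thesis by (simp add: atLeast0LessThan)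
qed

lemma rbar_eq: "rbar m r i = (if i < m then r (i+m) else if i < 2*m then - r (i-m) else 0)"
proof -
  consider "i < m" | "m \<le> i" "i < 2*m" | "2*m \<le> i" by linarith
  then show ?thesis
  proof cases
    case 1
    have "(\<Sum>j<2*m. Jmat m i j * r j) = (\<Sum>j<2*m. if j = i + m then r j else 0)"
      using 1 by (intro sum.cong) (auto simp: Jmat_def)
    also have "\<dots> = r (i+m)" using 1 by (simp add: sum.delta)
    finally show ?thesis using 1 by (simp add: rbar_def mvec_def)
  next
    case 2
    have "(\<Sum>j<2*m. Jmat m i j * r j) = (\<Sum>j<2*m. if j = i - m then - r j else 0)"
      using 2 by (intro sum.cong) (auto simp: Jmat_def)
    also have "\<dots> = - r (i-m)" using 2 by (simp add: sum.delta)
    finally show ?thesis using 2 by (simp add: rbar_def mvec_def)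
  next
    case 3 then show ?thesis by (simp add: rbar_def mvec_def)
  qed
qed

lemma jform2: "(\<Sum>k<2*m. a k * rbar m b k) = om m b a"
  unfolding sum_split2 om_def rbar_eq by (simp add: sum.distrib[symmetric] sum_subtractf[symmetric] algebra_simps)

lemma jform1: "(\<Sum>l<2*m. (\<Sum>k<2*m. a k * Jmat m k l) * b l) = om m b a"
proof -
  have "(\<Sum>l<2*m. (\<Sum>k<2*m. a k * Jmat m k l) * b l) = (\<Sum>k<2*m. a k * (\<Sum>l<2*m. Jmat m k l * b l))"
    unfolding sum_distrib_left sum_distrib_right
    by (subst sum.swap) (simp add: ac_simps)
  also have "\<dots> = (\<Sum>k<2*m. a k * rbar m b k)"
    by (rule sum.cong) (auto simp: rbar_def mvec_def)
  finally show ?thesis using jform2 by simp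
qed

lemma bil_rbar: "bil (2*m) (ofi (rbar m r)) (ofi s) = (of_int (om m r s) :: 'k::field)"
proof -
  have "bil (2*m) (ofi (rbar m r)) (ofi s) = (of_int (\<Sum>k<2*m. s k * rbar m r k) :: 'k)"
    by (simp add: bil_def ofi_def algebra_simps)
  thus ?thesis by (simp add: jform2)
qed

lemma rbar_add: "rbar m (r + s) = rbar m r + rbar m s"
  by (simp add: fun_eq_iff rbar_eq)

lemma rbar_via_om: "i < 2*m \<Longrightarrow> rbar m b i = om m b (ee i)"
proof -
  assume i: "i < 2*m"
  have "om m b (ee i) = (\<Sum>k<2*m. ee i k * rbar m b k)" by (simp add: jform2)
  also have "\<dots> = (\<Sum>k<2*m. if k = i then rbar m b k else 0)" by (rule sum.cong) (auto simp: ee_def)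
  also have "\<dots> = rbar m b i" using i by (simp add: sum.delta)
  finally show ?thesis by simp
qed

lemma Jmat_via_om: "i < 2*m \<Longrightarrow> j < 2*m \<Longrightarrow> Jmat m i j = om m (ee j) (ee i)"
proof -
  assume i: "i < 2*m" and j: "j < 2*m"
  have "om m (ee j) (ee i) = (\<Sum>l<2*m. (\<Sum>k<2*m. ee i k * Jmat m k l) * ee j l)" by (simp add: jform1)
  also have "\<dots> = (\<Sum>l<2*m. if l = j then Jmat m i l else 0)"
  proof (rule sum.cong[OF refl])
    fix l assume "l \<in> {..<2*m}"
    have "(\<Sum>k<2*m. ee i k * Jmat m k l) = (\<Sum>k<2*m. if k = i then Jmat m k l else 0)"
      by (rule sum.cong) (auto simp: ee_def)
    also have "\<dots> = Jmat m i l" using i by (simp add: sum.delta)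
    finally show "(\<Sum>k<2*m. ee i k * Jmat m k l) * ee j l = (if l = j then Jmat m i l else 0)"
      by (simp add: ee_def)
  qed
  also have "\<dots> = Jmat m i j" using j by (simp add: sum.delta)
  finally show ?thesis by simp
qed

lemma wscale_wscale: "wscale a (wscale b x) = wscale (a*b) x"
  by (simp add: wscale_def fun_eq_iff)

lemma wscale_1: "wscale 1 x = x"
  by (simp add: wscale_def)

lemma prod_m1_powi: "finite A \<Longrightarrow> (\<Prod>i\<in>A. (-1::'k::field) powi f i) = (-1) powi (\<Sum>i\<in>A. f i)"
  by (induction A rule: finite_induct) (auto simp: power_int_add)

lemma core:
  fixes \<phi> :: "(nat \<Rightarrow> int) \<Rightarrow> (nat \<Rightarrow> int)" and c :: "(nat \<Rightarrow> int) \<Rightarrow> 'k::field_char_0"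
  assumes m: "m \<ge> 1"
  and H0: "\<And>r. r \<in> VV m \<Longrightarrow> \<phi> r \<in> VV m"
  and Hc: "\<And>r. r \<in> VV m \<Longrightarrow> c r \<noteq> 0"
  and H1: "\<And>r. r \<in> VV m \<Longrightarrow> \<phi> (-r) = - \<phi> r"
  and H2: "\<And>r s. r \<in> VV m \<Longrightarrow> s \<in> VV m \<Longrightarrow> om m r s \<noteq> 0 \<Longrightarrow>
             \<phi> (r+s) = \<phi> r + \<phi> s \<and> of_int (om m r s) * c (r+s) = c r * c s * of_int (om m (\<phi> r) (\<phi> s))"
  and H3: "\<And>r s. r \<in> VV m \<Longrightarrow> s \<in> VV m \<Longrightarrow> om m r s = 0 \<Longrightarrow> om m (\<phi> r) (\<phi> s) = 0"
  and Hinj: "inj_on \<phi> (VV m)"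
  and Hsurj: "\<And>s. s \<in> VV m \<Longrightarrow> \<exists>r\<in>VV m. \<phi> r = s"
  shows "\<exists>(l :: nat \<Rightarrow> 'k) Q P. (\<forall>i<2*m. l i \<noteq> 0) \<and> Q \<in> GSp m \<and> is_inv (2*m) Q P \<and>
           (\<forall>r\<in>VV m. wscale (c r) (hv m (\<phi> r)) =
                (if meq (2*m) (mmul (2*m) (mmul (2*m) (mtr Q) (Jmat m)) Q) (Jmat m)
                 then wscale (lpow (2*m) l r)
                        (Dv (2*m) (ofi (mvec (2*m) (mtr P) (rbar m r))) (mvec (2*m) Q r))
                 else wscale ((-1) powi (vabs (2*m) r) * lpow (2*m) l r)
                        (Dv (2*m) (ofi (mvec (2*m) (mtr P) (rbar m r))) (mvec (2*m) Q r))))"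
proof -
  define \<Phi> where "\<Phi> r = (if r = 0 then 0 else \<phi> r)" for r
  have \<Phi>0: "\<Phi> 0 = 0" by (simp add: \<Phi>_def)
  have \<Phi>Z: "\<Phi> r \<in> Zn (2*m)" if "r \<in> Zn (2*m)" for r
    using H0[of r] that Zn_0 by (auto simp: \<Phi>_def)
  have \<Phi>V: "\<Phi> r = \<phi> r" if "r \<noteq> 0" for r using that by (simp add: \<Phi>_def)
  have H2': "om m (\<phi> r) (\<phi> s) \<noteq> 0" if rs: "r \<in> VV m" "s \<in> VV m" "om m r s \<noteq> 0" for r s
  proof -
    have "r + s \<in> VV m" using om_nz[OF rs(3)] rs Zn_add by auto
    hence "of_int (om m r s) * c (r+s) \<noteq> (0::'k)" using Hc rs(3) by simp
    hence "c r * c s * of_int (om m (\<phi> r) (\<phi> s)) \<noteq> (0::'k)" using H2[OF rs] by simp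
    thus ?thesis by auto
  qed
  have \<Phi>add: "\<Phi> (r+s) = \<Phi> r + \<Phi> s" if "r \<in> Zn (2*m)" "s \<in> Zn (2*m)" for r s
  proof (rule add_ext[of m \<Phi>, OF _ _ \<Phi>0 that])
    fix r s assume rs: "r \<in> VV m" "s \<in> VV m" "om m r s \<noteq> 0"
    have "r + s \<noteq> 0" using om_nz[OF rs(3)] by simp
    thus "\<Phi> (r + s) = \<Phi> r + \<Phi> s" using H2[OF rs] rs by (simp add: \<Phi>_def)
  next
    fix r assume r: "r \<in> VV m"
    hence "- r \<noteq> 0" by simp
    thus "\<Phi> (- r) = - \<Phi> r" using H1[OF r] r by (simp add: \<Phi>_def)
  qed
  have \<Phi>zero: "om m r s = 0 \<longleftrightarrow> om m (\<Phi> r) (\<Phi> s) = 0" if rs: "r \<in> Zn (2*m)" "s \<in> Zn (2*m)" for r s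
  proof (cases "r = 0 \<or> s = 0")
    case True then show ?thesis by (auto simp: \<Phi>_def om_01 om_02)
  next
    case False
    hence "r \<in> VV m" "s \<in> VV m" using rs by auto
    then show ?thesis using H2' H3 False by (auto simp: \<Phi>_def)
  qed
  have \<Phi>inj: "inj_on \<Phi> (Zn (2*m))"
  proof (rule inj_onI)
    fix x y assume xy: "x \<in> Zn (2*m)" "y \<in> Zn (2*m)" "\<Phi> x = \<Phi> y"
    show "x = y"
    proof (cases "x = 0 \<or> y = 0")
      case True
      then show ?thesis using xy H0[of x] H0[of y] by (auto simp: \<Phi>_def split: if_splits)
    next
      case False
      then show ?thesis using xy Hinj by (auto simp: \<Phi>_def inj_on_def)
    qed
  qed
  have \<Phi>surj: "\<Phi> ` Zn (2*m) = Zn (2*m)"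
  proof
    show "\<Phi> ` Zn (2 * m) \<subseteq> Zn (2 * m)" using \<Phi>Z by auto
    show "Zn (2 * m) \<subseteq> \<Phi> ` Zn (2 * m)"
    proof
      fix s assume s: "s \<in> Zn (2*m)"
      show "s \<in> \<Phi> ` Zn (2*m)"
      proof (cases "s = 0")
        case True then show ?thesis using \<Phi>0 Zn_0 by (metis image_eqI)
      next
        case False
        then obtain r where "r \<in> VV m" "\<phi> r = s" using Hsurj s by blast
        then show ?thesis using \<Phi>V by (metis DiffE image_eqI singletonI)
      qed
    qed
  qed
  define \<Psi> where "\<Psi> = inv_into (Zn (2*m)) \<Phi>"
  have \<Psi>Z: "\<Psi> x \<in> Zn (2*m)" if "x \<in> Zn (2*m)" for x
    unfolding \<Psi>_def using that \<Phi>surj by (metis inv_into_into)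
  have \<Phi>\<Psi>: "\<Phi> (\<Psi> x) = x" if "x \<in> Zn (2*m)" for x
    unfolding \<Psi>_def using that \<Phi>surj by (metis f_inv_into_f)
  have \<Psi>add: "\<Psi> (x+y) = \<Psi> x + \<Psi> y" if "x \<in> Zn (2*m)" "y \<in> Zn (2*m)" for x y
  proof (rule inj_onD[OF \<Phi>inj])
    show "\<Phi> (\<Psi> (x + y)) = \<Phi> (\<Psi> x + \<Psi> y)"
      using \<Phi>add[OF \<Psi>Z[OF that(1)] \<Psi>Z[OF that(2)]] \<Phi>\<Psi> that Zn_add by simp
    show "\<Psi> (x + y) \<in> Zn (2 * m)" using \<Psi>Z Zn_add that by blast
    show "\<Psi> x + \<Psi> y \<in> Zn (2 * m)" using \<Psi>Z Zn_add that by blast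
  qed
  have \<Psi>zero: "om m (\<Psi> x) (\<Psi> y) = 0" if "x \<in> Zn (2*m)" "y \<in> Zn (2*m)" "om m x y = 0" for x y
    using \<Phi>zero[OF \<Psi>Z[OF that(1)] \<Psi>Z[OF that(2)]] \<Phi>\<Psi> that by simp
  define \<mu> where "\<mu> = om m (\<Phi> (ee m)) (\<Phi> (ee 0))"
  define \<mu>' where "\<mu>' = om m (\<Psi> (ee m)) (\<Psi> (ee 0))"
  have s\<Phi>: "om m (\<Phi> r) (\<Phi> s) = \<mu> * om m r s" if "r \<in> Zn (2*m)" "s \<in> Zn (2*m)" for r s
    unfolding \<mu>_def by (rule sympl_scalar[OF \<Phi>add _ m that]) (use \<Phi>zero in blast)+
  have s\<Psi>: "om m (\<Psi> r) (\<Psi> s) = \<mu>' * om m r s" if "r \<in> Zn (2*m)" "s \<in> Zn (2*m)" for r s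
    unfolding \<mu>'_def by (rule sympl_scalar[OF \<Psi>add _ m that]) (use \<Psi>zero in blast)+
  have em: "ee m \<in> Zn (2*m)" "ee 0 \<in> Zn (2*m)" using m by (auto intro!: Zn_ee)
  have om1: "om m (ee m) (ee 0) = 1" using m by (simp add: om_ee)
  have "1 = om m (\<Phi> (\<Psi> (ee m))) (\<Phi> (\<Psi> (ee 0)))" using om1 \<Phi>\<Psi> em by simp
  also have "\<dots> = \<mu> * (\<mu>' * 1)" using s\<Phi>[OF \<Psi>Z \<Psi>Z] s\<Psi> em om1 by simp
  finally have "\<mu> * \<mu>' = 1" by simp
  hence mu: "\<mu> = 1 \<or> \<mu> = -1" using zmult_eq_1_iff by blast
  hence mu2: "\<mu> * \<mu> = 1" by auto
  have mu2k: "(of_int \<mu> :: 'k) * of_int \<mu> = 1" using mu by auto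
  have \<Phi>lin: "\<Phi> r i = (\<Sum>j<2*m. r j * \<Phi> (ee j) i)" if "r \<in> Zn (2*m)" for r i
    using lin_ext[of "2*m" "\<lambda>r. \<Phi> r i" r] \<Phi>add that by simp
  have \<Psi>lin: "\<Psi> r i = (\<Sum>j<2*m. r j * \<Psi> (ee j) i)" if "r \<in> Zn (2*m)" for r i
    using lin_ext[of "2*m" "\<lambda>r. \<Psi> r i" r] \<Psi>add that by simp
  define Q where "Q = (\<lambda>i j. \<Phi> (ee j) i)"
  define P where "P = (\<lambda>i j. \<Psi> (ee j) i)"
  have mvecQ: "mvec (2*m) Q r = \<Phi> r" if r: "r \<in> Zn (2*m)" for r
  proof
    fix i show "mvec (2*m) Q r i = \<Phi> r i"
      using \<Phi>lin[OF r, of i] \<Phi>Z[OF r] by (auto simp: mvec_def Q_def Zn_def mult.commute)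
  qed
  have invQP: "is_inv (2*m) Q P"
  proof -
    have "meq (2*m) (mmul (2*m) Q P) mid"
    proof (unfold meq_def, intro allI impI)
      fix i j assume ij: "i < 2*m" "j < 2*m"
      have "mmul (2*m) Q P i j = \<Phi> (\<Psi> (ee j)) i"
        using \<Phi>lin[OF \<Psi>Z[OF Zn_ee[OF ij(2)]], of i] by (simp add: mmul_def Q_def P_def mult.commute)
      also have "\<dots> = mid i j" using \<Phi>\<Psi>[OF Zn_ee[OF ij(2)]] by (simp add: ee_def mid_def)
      finally show "mmul (2*m) Q P i j = mid i j" .
    qed
    moreover have "meq (2*m) (mmul (2*m) P Q) mid"
    proof (unfold meq_def, intro allI impI)
      fix i j assume ij: "i < 2*m" "j < 2*m"
      have "\<Psi> (\<Phi> (ee j)) = ee j"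
        unfolding \<Psi>_def using inv_into_f_f[OF \<Phi>inj Zn_ee[OF ij(2)]] .
      moreover have "mmul (2*m) P Q i j = \<Psi> (\<Phi> (ee j)) i"
        using \<Psi>lin[OF \<Phi>Z[OF Zn_ee[OF ij(2)]], of i] by (simp add: mmul_def Q_def P_def mult.commute)
      ultimately show "mmul (2*m) P Q i j = mid i j" by (simp add: ee_def mid_def)
    qed
    ultimately show ?thesis by (simp add: is_inv_def)
  qed
  have QJQ: "mmul (2*m) (mmul (2*m) (mtr Q) (Jmat m)) Q i j = \<mu> * Jmat m i j" if ij: "i < 2*m" "j < 2*m" for i j
  proof -
    have "mmul (2*m) (mmul (2*m) (mtr Q) (Jmat m)) Q i j
          = (\<Sum>l<2*m. (\<Sum>k<2*m. \<Phi> (ee i) k * Jmat m k l) * \<Phi> (ee j) l)"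
      by (simp add: mmul_def mtr_def Q_def)
    also have "\<dots> = om m (\<Phi> (ee j)) (\<Phi> (ee i))" by (rule jform1)
    also have "\<dots> = \<mu> * om m (ee j) (ee i)" using s\<Phi> Zn_ee ij by blast
    also have "\<dots> = \<mu> * Jmat m i j" using Jmat_via_om[OF ij] by simp
    finally show ?thesis .
  qed
  have J0m: "Jmat m 0 m = 1" using m by (simp add: Jmat_def)
  have inGSp: "Q \<in> GSp m"
    unfolding GSp_def using invQP mu QJQ by (auto simp: meq_def mneg_def)
  have meqiff: "meq (2*m) (mmul (2*m) (mmul (2*m) (mtr Q) (Jmat m)) Q) (Jmat m) \<longleftrightarrow> \<mu> = 1"
  proof
    assume "meq (2*m) (mmul (2*m) (mmul (2*m) (mtr Q) (Jmat m)) Q) (Jmat m)"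
    hence "\<mu> * Jmat m 0 m = Jmat m 0 m" using QJQ[of 0 m] m by (auto simp: meq_def)
    thus "\<mu> = 1" using J0m by simp
  next
    assume "\<mu> = 1" thus "meq (2*m) (mmul (2*m) (mmul (2*m) (mtr Q) (Jmat m)) Q) (Jmat m)"
      using QJQ by (simp add: meq_def)
  qed
  have uvec: "mvec (2*m) (mtr P) (rbar m r) i = \<mu> * rbar m (\<Phi> r) i" if r: "r \<in> Zn (2*m)" and i: "i < 2*m" for r i
  proof -
    have ei: "ee i \<in> Zn (2*m)" using i by (rule Zn_ee)
    have "mvec (2*m) (mtr P) (rbar m r) i = (\<Sum>j<2*m. \<Psi> (ee i) j * rbar m r j)"
      using i by (simp add: mvec_def mtr_def P_def)
    also have "\<dots> = om m r (\<Psi> (ee i))" by (rule jform2)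
    finally have a: "mvec (2*m) (mtr P) (rbar m r) i = om m r (\<Psi> (ee i))" .
    have "rbar m (\<Phi> r) i = om m (\<Phi> r) (ee i)" using i by (rule rbar_via_om)
    also have "\<dots> = om m (\<Phi> r) (\<Phi> (\<Psi> (ee i)))" using \<Phi>\<Psi>[OF ei] by simp
    also have "\<dots> = \<mu> * om m r (\<Psi> (ee i))" using s\<Phi>[OF r \<Psi>Z[OF ei]] .
    finally have "\<mu> * rbar m (\<Phi> r) i = \<mu> * \<mu> * om m r (\<Psi> (ee i))" by simp
    thus ?thesis using a mu2 by simp
  qed
  have Dvec: "Dv (2*m) (ofi (mvec (2*m) (mtr P) (rbar m r))) (mvec (2*m) Q r) = wscale (of_int \<mu>) (hv m (\<phi> r))"
    if r: "r \<in> VV m" for r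
  proof -
    have e1: "mvec (2*m) Q r = \<phi> r" using mvecQ[of r] r \<Phi>V by auto
    have e2: "\<Phi> r = \<phi> r" using r \<Phi>V by auto
    have u: "mvec (2*m) (mtr P) (rbar m r) i = \<mu> * rbar m (\<phi> r) i" if "i < 2*m" for i
      using uvec[of r i] r that unfolding e2 by auto
    show ?thesis unfolding e1
      by (rule ext, rule ext) (simp add: Dv_def wscale_def hv_def ofi_def u)
  qed
  define D where "D r = (if r = 0 then 1 else of_int \<mu> * c r)" for r
  have DV: "D r = of_int \<mu> * c r" if "r \<noteq> 0" for r using that by (simp add: D_def)
  have Dnz: "D r \<noteq> 0" if "r \<in> Zn (2*m)" for r
    using that Hc mu by (auto simp: D_def)
  have Dmult: "D (r+s) = D r * D s" if "r \<in> Zn (2*m)" "s \<in> Zn (2*m)" for r s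
  proof (rule mult_ext[of m D, OF _ _ _ that])
    fix r s assume rs: "r \<in> VV m" "s \<in> VV m" "om m r s \<noteq> 0"
    have rs0: "r + s \<noteq> 0" using om_nz[OF rs(3)] by simp
    have "of_int (om m r s) * c (r+s) = c r * c s * of_int (\<mu> * om m r s)"
      using H2[OF rs] s\<Phi>[of r s] rs \<Phi>V by auto
    hence "of_int (om m r s) * c (r+s) = of_int (om m r s) * (c r * c s * of_int \<mu>)"
      by (simp add: algebra_simps)
    hence "c (r+s) = c r * c s * of_int \<mu>" using rs(3) by simp
    hence "of_int \<mu> * c (r+s) = (c r * c s) * (of_int \<mu> * of_int \<mu>)" by (simp add: ac_simps)
    hence a: "of_int \<mu> * c (r+s) = c r * c s" unfolding mu2k by simp
    have "(of_int \<mu> * c r) * (of_int \<mu> * c s) = (of_int \<mu> * of_int \<mu>) * (c r * c s)" by (simp add: ac_simps)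
    hence "(of_int \<mu> * c r) * (of_int \<mu> * c s) = c r * c s" unfolding mu2k by simp
    hence "of_int \<mu> * c (r+s) = (of_int \<mu> * c r) * (of_int \<mu> * c s)" using a by simp
    thus "D (r+s) = D r * D s" using rs0 rs by (simp add: D_def)
  next
    show "D r \<noteq> 0" if "r \<in> VV m" for r using Dnz that by blast
    show "D 0 = 1" by (simp add: D_def)
  qed
  define lam where "lam j = D (ee j)" for j
  have lnz: "lam j \<noteq> 0" if "j < 2*m" for j unfolding lam_def using Dnz Zn_ee that by blast
  have cD: "c r = of_int \<mu> * lpow (2*m) lam r" if r: "r \<in> VV m" for r
  proof -
    have "D r = lpow (2*m) lam r" unfolding lpow_def lam_def
      using mult_lin_ext[of "2*m" D r] Dmult Dnz r by blast
    moreover have "D r = of_int \<mu> * c r" using DV r by auto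
    ultimately have "of_int \<mu> * (of_int \<mu> * c r) = of_int \<mu> * lpow (2*m) lam r" by simp
    thus ?thesis using mu2k by (simp add: mult.assoc[symmetric])
  qed
  from mu show ?thesis
  proof
    assume mu1: "\<mu> = 1"
    show ?thesis
    proof (intro exI conjI)
      show "\<forall>i<2*m. lam i \<noteq> 0" using lnz by blast
      show "Q \<in> GSp m" by (rule inGSp)
      show "is_inv (2*m) Q P" by (rule invQP)
      show "\<forall>r\<in>VV m. wscale (c r) (hv m (\<phi> r)) =
                (if meq (2*m) (mmul (2*m) (mmul (2*m) (mtr Q) (Jmat m)) Q) (Jmat m)
                 then wscale (lpow (2*m) lam r)
                        (Dv (2*m) (ofi (mvec (2*m) (mtr P) (rbar m r))) (mvec (2*m) Q r))
                 else wscale ((-1) powi (vabs (2*m) r) * lpow (2*m) lam r)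
                        (Dv (2*m) (ofi (mvec (2*m) (mtr P) (rbar m r))) (mvec (2*m) Q r)))"
      proof
        fix r assume r: "r \<in> VV m"
        show "wscale (c r) (hv m (\<phi> r)) =
                (if meq (2*m) (mmul (2*m) (mmul (2*m) (mtr Q) (Jmat m)) Q) (Jmat m)
                 then wscale (lpow (2*m) lam r)
                        (Dv (2*m) (ofi (mvec (2*m) (mtr P) (rbar m r))) (mvec (2*m) Q r))
                 else wscale ((-1) powi (vabs (2*m) r) * lpow (2*m) lam r)
                        (Dv (2*m) (ofi (mvec (2*m) (mtr P) (rbar m r))) (mvec (2*m) Q r)))"
          unfolding Dvec[OF r] using meqiff mu1 cD[OF r] by (simp add: wscale_1)
      qed
    qed
  next
    assume mu1: "\<mu> = -1"
    define l where "l j = - lam j" for j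
    have lp: "lpow (2*m) l r = (-1) powi (vabs (2*m) r) * lpow (2*m) lam r" for r
    proof -
      have "lpow (2*m) l r = (\<Prod>i<2*m. (-1) powi r i * lam i powi r i)"
        unfolding lpow_def l_def by (rule prod.cong) (auto simp: power_int_mult_distrib[symmetric])
      also have "\<dots> = (-1) powi (vabs (2*m) r) * lpow (2*m) lam r"
        by (simp add: prod.distrib prod_m1_powi lpow_def vabs_def)
      finally show ?thesis .
    qed
    show ?thesis
    proof (intro exI conjI)
      show "\<forall>i<2*m. l i \<noteq> 0" using lnz by (simp add: l_def)
      show "Q \<in> GSp m" by (rule inGSp)
      show "is_inv (2*m) Q P" by (rule invQP)
      show "\<forall>r\<in>VV m. wscale (c r) (hv m (\<phi> r)) =
                (if meq (2*m) (mmul (2*m) (mmul (2*m) (mtr Q) (Jmat m)) Q) (Jmat m)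
                 then wscale (lpow (2*m) l r)
                        (Dv (2*m) (ofi (mvec (2*m) (mtr P) (rbar m r))) (mvec (2*m) Q r))
                 else wscale ((-1) powi (vabs (2*m) r) * lpow (2*m) l r)
                        (Dv (2*m) (ofi (mvec (2*m) (mtr P) (rbar m r))) (mvec (2*m) Q r)))"
      proof
        fix r assume r: "r \<in> VV m"
        have sc: "(-1) powi (vabs (2*m) r) * lpow (2*m) l r * of_int \<mu> = (c r :: 'k)"
          using cD[OF r] mu1 lp[of r] by (simp add: mult.assoc[symmetric])
        thus "wscale (c r) (hv m (\<phi> r)) =
                (if meq (2*m) (mmul (2*m) (mmul (2*m) (mtr Q) (Jmat m)) Q) (Jmat m)
                 then wscale (lpow (2*m) l r)
                        (Dv (2*m) (ofi (mvec (2*m) (mtr P) (rbar m r))) (mvec (2*m) Q r))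
                 else wscale ((-1) powi (vabs (2*m) r) * lpow (2*m) l r)
                        (Dv (2*m) (ofi (mvec (2*m) (mtr P) (rbar m r))) (mvec (2*m) Q r)))"
          unfolding Dvec[OF r] wscale_wscale sc using meqiff mu1 by simp
      qed
    qed
  qed
qed

abbreviation Z0 :: "'k::field wel" where "Z0 \<equiv> (\<lambda>s i. 0)"

lemma hv_eq: "hv m r = (\<lambda>s i. if s = r \<and> i < 2*m then of_int (rbar m r i) else 0)"
  by (simp add: hv_def Dv_def ofi_def)

lemma rbar_nz: "r \<in> VV m \<Longrightarrow> \<exists>i<2*m. rbar m r i \<noteq> 0"
proof -
  assume r: "r \<in> VV m"
  then obtain j where j: "j < 2*m" "r j \<noteq> 0" using Zn_nz by blast
  show ?thesis
  proof (cases "j < m")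
    case True
    then show ?thesis using j by (intro exI[of _ "j+m"]) (simp add: rbar_eq)
  next
    case False
    then show ?thesis using j by (intro exI[of _ "j-m"]) (auto simp add: rbar_eq)
  qed
qed

lemma hv_0: "hv m 0 = (Z0 :: 'k::field wel)"
  by (simp add: hv_eq rbar_eq fun_eq_iff)

lemma wscale_0: "wscale 0 x = Z0" by (simp add: wscale_def)
lemma wscale_Z0: "wscale a Z0 = Z0" by (simp add: wscale_def)

lemma wscale_hv_inj:
  assumes x: "x \<in> VV m" and y: "y \<in> Zn (2*m)" and a: "a \<noteq> 0"
    and e: "wscale a (hv m x) = (wscale b (hv m y) :: 'k::field_char_0 wel)"
  shows "x = y \<and> a = b"
proof -
  obtain i where i: "i < 2*m" "rbar m x i \<noteq> 0" using rbar_nz[OF x] by blast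
  have "wscale a (hv m x) x i = wscale b (hv m y) x i" using e by simp
  hence eq: "a * of_int (rbar m x i) = b * (if x = y then of_int (rbar m y i) else 0)"
    using i by (simp add: wscale_def hv_eq)
  have "a * of_int (rbar m x i) \<noteq> (0::'k)" using a i by simp
  hence "x = y" using eq by (auto split: if_splits)
  thus ?thesis using eq i by simp
qed

lemma wscale_hv_zero:
  assumes x: "x \<in> VV m" and e: "wscale a (hv m x) = (Z0 :: 'k::field_char_0 wel)"
  shows "a = 0"
proof -
  obtain i where i: "i < 2*m" "rbar m x i \<noteq> 0" using rbar_nz[OF x] by blast
  have "wscale a (hv m x) x i = 0" using e by simp
  thus ?thesis using i by (simp add: wscale_def hv_eq)
qed

lemma hv_nz:
  fixes x :: "nat \<Rightarrow> int"
  assumes x: "x \<in> VV m"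
  shows "(hv m x :: 'k::field_char_0 wel) \<noteq> Z0"
proof
  assume "(hv m x :: 'k wel) = Z0"
  hence "wscale (1::'k) (hv m x) = Z0" by (simp add: wscale_def)
  from wscale_hv_zero[OF x this] show False by simp
qed

lemma kline_inj:
  assumes x: "x \<in> VV m" and y: "y \<in> VV m" and e: "kline (hv m x) = (kline (hv m y) :: 'k::field_char_0 wel set)"
  shows "x = y"
proof -
  have "(hv m x :: 'k wel) \<in> kline (hv m x)" unfolding kline_def by (rule CollectI, rule exI[of _ 1]) (simp add: wscale_def)
  then obtain b :: 'k where "hv m x = wscale b (hv m y)" using e by (auto simp: kline_def)
  hence w: "wscale 1 (hv m x) = wscale b (hv m y)" by (simp add: wscale_def)
  have "x = y \<and> 1 = b" using wscale_hv_inj[OF x, of y 1 b] y w by simp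
  thus ?thesis by simp
qed

lemma wsupp_hv: "r \<in> VV m \<Longrightarrow> wsupp (2*m) (hv m r :: 'k::field_char_0 wel) = {r}"
  using rbar_nz[of r m] by (auto simp: wsupp_def hv_eq)

lemma bil_cong: "(\<And>i. i < N \<Longrightarrow> u i = u' i) \<Longrightarrow> bil N u v = bil N u' v"
  by (simp add: bil_def)

lemma wbr_hv:
  assumes r: "r \<in> VV m" and s: "s \<in> VV m"
  shows "wbr (2*m) (hv m r) (hv m s) = (wscale (of_int (om m r s)) (hv m (r+s)) :: 'k::field_char_0 wel)"
proof (rule ext, rule ext)
  fix t i
  have prodeq: "{r} \<times> {s} = {(r,s)}" by simp
  have b1: "bil (2*m) (hv m r r) (ofi s) = (of_int (om m r s) :: 'k)"
    using bil_rbar[of m r s] by (subst bil_cong[of _ _ "ofi (rbar m r)"]) (auto simp: hv_eq ofi_def)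
  have b2: "bil (2*m) (hv m s s) (ofi r) = (of_int (om m s r) :: 'k)"
    using bil_rbar[of m s r] by (subst bil_cong[of _ _ "ofi (rbar m s)"]) (auto simp: hv_eq ofi_def)
  have "wbr (2*m) (hv m r) (hv m s) t i =
     (if r + s = t \<and> i < 2*m then
        bil (2*m) (hv m r r) (ofi s) * hv m s s i - bil (2*m) (hv m s s) (ofi r) * (hv m r r i :: 'k)
      else 0)"
    unfolding wbr_def wsupp_hv[OF r] wsupp_hv[OF s] prodeq sum.insert_if finite.emptyI sum.empty fst_conv snd_conv vadd_eq by simp
  also have "\<dots> = wscale (of_int (om m r s)) (hv m (r+s)) t i"
    unfolding b1 b2 by (auto simp: wscale_def hv_eq om_anti[of m s r] rbar_add algebra_simps)
  finally show "wbr (2*m) (hv m r) (hv m s) t i = (wscale (of_int (om m r s)) (hv m (r+s)) t i :: 'k)" .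
qed

lemma wsupp_wscale: "a \<noteq> 0 \<Longrightarrow> wsupp N (wscale a x) = wsupp N (x :: 'k::field wel)"
  by (simp add: wsupp_def wscale_def)

lemma wbr_wscale:
  assumes a: "a \<noteq> 0" and b: "b \<noteq> 0"
  shows "wbr N (wscale a x) (wscale b y) = wscale (a*b) (wbr N x (y :: 'k::field wel))"
proof (rule ext, rule ext)
  fix t i
  have bl: "bil N (\<lambda>i. c * u i) v = c * bil N u v" for c :: 'k and u v
    by (simp add: bil_def sum_distrib_left algebra_simps)
  show "wbr N (wscale a x) (wscale b y) t i = wscale (a*b) (wbr N x y) t i"
    unfolding wbr_def wscale_def wsupp_wscale[OF a, unfolded wscale_def] wsupp_wscale[OF b, unfolded wscale_def]
    by (simp add: sum_distrib_left) (rule sum.cong[OF refl], simp add: bl algebra_simps)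
qed

lemma hv_Hder: "r \<in> VV m \<Longrightarrow> wscale a (hv m r) \<in> (Hder m :: 'k::field wel set)"
  unfolding Hder_def zerov_eq
  by (rule CollectI, rule exI[of _ "{r}"], rule exI[of _ "\<lambda>_. a"]) (simp add: wscale_def)

lemma hv_Hder1: "r \<in> VV m \<Longrightarrow> hv m r \<in> (Hder m :: 'k::field wel set)"
  using hv_Hder[of r m 1] by (simp add: wscale_def)

lemma Z0_Hder: "(Z0 :: 'k::field wel) \<in> Hder m"
  unfolding Hder_def zerov_eq
  by (rule CollectI, rule exI[of _ "{}"], rule exI[of _ "\<lambda>_. 0"]) simp

lemma sum_Hder: "finite F \<Longrightarrow> F \<subseteq> VV m \<Longrightarrow> (\<lambda>s i. \<Sum>x\<in>F. a x * hv m x s i) \<in> (Hder m :: 'k::field wel set)"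
  unfolding Hder_def zerov_eq by blast

lemma Hder_Ham: "x \<in> Hder m \<Longrightarrow> x \<in> (Ham m :: 'k::field wel set)"
  unfolding Ham_def
  by (rule CollectI, rule exI[of _ x], rule exI[of _ "\<lambda>_. 0"]) simp

lemma kline_Hder: "r \<in> VV m \<Longrightarrow> kline (hv m r) \<subseteq> (Hder m :: 'k::field wel set)"
  unfolding kline_def using hv_Hder by blast

lemma hv_in_kline: "hv m r \<in> kline (hv m r :: 'k::field wel)"
  unfolding kline_def by (rule CollectI, rule exI[of _ 1]) (simp add: wscale_def)

theorem lemma3p1:
  fixes m :: nat and \<sigma> :: "'k::field_char_0 wel \<Rightarrow> 'k wel"
  assumes alg_closed: "\<forall>p :: 'k poly. degree p \<ge> 1 \<longrightarrow> (\<exists>x. poly p x = 0)"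
    and m_pos: "m \<ge> 1"
    and aut: "lie_aut (2*m) (Hder m) \<sigma> \<or>
              (lie_aut (2*m) (Ham m) \<sigma> \<and> \<sigma> ` Hder m = Hder m)"
    and lines: "\<forall>r\<in>Zn (2*m) - {zerov}. \<exists>s\<in>Zn (2*m) - {zerov}.
                  \<sigma> ` kline (hv m r) = kline (hv m s) \<and>
                  \<sigma> ` kline (hv m (vneg r)) = kline (hv m (vneg s))"
  shows "\<exists>(l :: nat \<Rightarrow> 'k) Q P. (\<forall>i<2*m. l i \<noteq> 0) \<and> Q \<in> GSp m \<and> is_inv (2*m) Q P \<and>
           (\<forall>r\<in>Zn (2*m) - {zerov}.
              \<sigma> (Dv (2*m) (ofi (rbar m r)) r) =
                (if meq (2*m) (mmul (2*m) (mmul (2*m) (mtr Q) (Jmat m)) Q) (Jmat m)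
                 then wscale (lpow (2*m) l r)
                        (Dv (2*m) (ofi (mvec (2*m) (mtr P) (rbar m r))) (mvec (2*m) Q r))
                 else wscale ((-1) powi (vabs (2*m) r) * lpow (2*m) l r)
                        (Dv (2*m) (ofi (mvec (2*m) (mtr P) (rbar m r))) (mvec (2*m) Q r))))"
proof -
  have Sinj: "inj_on \<sigma> (Hder m)" and Sim: "\<sigma> ` Hder m = Hder m"
    and Sadd: "\<And>x y. x \<in> Hder m \<Longrightarrow> y \<in> Hder m \<Longrightarrow> \<sigma> (wadd x y) = wadd (\<sigma> x) (\<sigma> y)"
    and Ssc: "\<And>c x. x \<in> Hder m \<Longrightarrow> \<sigma> (wscale c x) = wscale c (\<sigma> x)"
    and Sbr: "\<And>x y. x \<in> Hder m \<Longrightarrow> y \<in> Hder m \<Longrightarrow> \<sigma> (wbr (2*m) x y) = wbr (2*m) (\<sigma> x) (\<sigma> y)"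
  proof -
    from aut show "inj_on \<sigma> (Hder m)"
    proof
      assume "lie_aut (2*m) (Hder m) \<sigma>" thus ?thesis by (simp add: lie_aut_def bij_betw_def)
    next
      assume "lie_aut (2*m) (Ham m) \<sigma> \<and> \<sigma> ` Hder m = Hder m"
      hence "inj_on \<sigma> (Ham m)" by (simp add: lie_aut_def bij_betw_def)
      thus ?thesis by (rule inj_on_subset) (use Hder_Ham in blast)
    qed
    from aut show "\<sigma> ` Hder m = Hder m"
      by (auto simp: lie_aut_def bij_betw_def)
    show "\<sigma> (wadd x y) = wadd (\<sigma> x) (\<sigma> y)" if "x \<in> Hder m" "y \<in> Hder m" for x y
      using aut that Hder_Ham unfolding lie_aut_def by blast
    show "\<sigma> (wscale c x) = wscale c (\<sigma> x)" if "x \<in> Hder m" for c x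
      using aut that Hder_Ham unfolding lie_aut_def by blast
    show "\<sigma> (wbr (2*m) x y) = wbr (2*m) (\<sigma> x) (\<sigma> y)" if "x \<in> Hder m" "y \<in> Hder m" for x y
      using aut that Hder_Ham unfolding lie_aut_def by blast
  qed
  have SZ0: "\<sigma> Z0 = Z0"
  proof -
    have "\<sigma> (wscale 0 Z0) = wscale 0 (\<sigma> Z0)" using Ssc Z0_Hder by blast
    thus ?thesis by (simp add: wscale_0)
  qed
  have lines': "\<exists>s\<in>VV m. \<sigma> ` kline (hv m r) = kline (hv m s) \<and> \<sigma> ` kline (hv m (-r)) = kline (hv m (-s))"
    if "r \<in> VV m" for r
    using lines that unfolding zerov_eq vneg_eq by blast
  define phi where "phi r = (SOME s. s \<in> VV m \<and> \<sigma> ` kline (hv m r) = kline (hv m s))" for r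
  have phi_prop: "phi r \<in> VV m \<and> \<sigma> ` kline (hv m r) = kline (hv m (phi r))" if r: "r \<in> VV m" for r
  proof -
    have "\<exists>s. s \<in> VV m \<and> \<sigma> ` kline (hv m r) = kline (hv m s)" using lines'[OF r] by blast
    thus ?thesis unfolding phi_def by (rule someI_ex)
  qed
  have phi_uniq: "phi r = s" if r: "r \<in> VV m" and s: "s \<in> VV m" and e: "\<sigma> ` kline (hv m r) = kline (hv m s)" for r s
    using phi_prop[OF r] e kline_inj[OF _ s, of "phi r"] by auto
  have H0: "phi r \<in> VV m" if "r \<in> VV m" for r using phi_prop that by blast
  have H1: "phi (-r) = - phi r" if r: "r \<in> VV m" for r
  proof -
    obtain s where s: "s \<in> VV m" "\<sigma> ` kline (hv m r) = kline (hv m s)" "\<sigma> ` kline (hv m (-r)) = kline (hv m (-s))"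
      using lines'[OF r] by blast
    have "phi r = s" using phi_uniq[OF r s(1,2)] .
    moreover have "-r \<in> VV m" "-s \<in> VV m" using r s(1) Zn_neg by auto
    ultimately show ?thesis using phi_uniq[of "-r" "-s"] s(3) by simp
  qed
  define cc where "cc r = (SOME a. \<sigma> (hv m r) = wscale a (hv m (phi r)))" for r
  have cc_prop: "\<sigma> (hv m r) = wscale (cc r) (hv m (phi r))" if r: "r \<in> VV m" for r
  proof -
    have "\<sigma> (hv m r) \<in> kline (hv m (phi r))" using phi_prop[OF r] hv_in_kline by blast
    hence "\<exists>a. \<sigma> (hv m r) = wscale a (hv m (phi r))" by (auto simp: kline_def)
    thus ?thesis unfolding cc_def by (rule someI_ex)
  qed
  have Hc: "cc r \<noteq> 0" if r: "r \<in> VV m" for r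
  proof
    assume "cc r = 0"
    hence "\<sigma> (hv m r) = \<sigma> Z0" using cc_prop[OF r] SZ0 by (simp add: wscale_0)
    hence "hv m r = (Z0 :: 'k wel)" using inj_onD[OF Sinj _ hv_Hder1[OF r] Z0_Hder] by blast
    thus False using hv_nz[OF r] by blast
  qed
  have BR: "\<sigma> (wscale (of_int (om m r s)) (hv m (r+s))) =
      wscale (cc r * cc s) (wscale (of_int (om m (phi r) (phi s))) (hv m (phi r + phi s)))"
    if r: "r \<in> VV m" and s: "s \<in> VV m" for r s
  proof -
    have "\<sigma> (wscale (of_int (om m r s)) (hv m (r+s))) = \<sigma> (wbr (2*m) (hv m r) (hv m s))"
      by (subst wbr_hv[OF r s]) (rule refl)
    also have "\<dots> = wbr (2*m) (\<sigma> (hv m r)) (\<sigma> (hv m s))" using Sbr hv_Hder1 r s by blast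
    also have "\<dots> = wbr (2*m) (wscale (cc r) (hv m (phi r))) (wscale (cc s) (hv m (phi s)))"
      using cc_prop r s by simp
    also have "\<dots> = wscale (cc r * cc s) (wbr (2*m) (hv m (phi r)) (hv m (phi s)))"
      by (rule wbr_wscale[OF Hc[OF r] Hc[OF s]])
    also have "\<dots> = wscale (cc r * cc s) (wscale (of_int (om m (phi r) (phi s))) (hv m (phi r + phi s)))"
      by (subst wbr_hv[OF H0[OF r] H0[OF s]]) (rule refl)
    finally show ?thesis .
  qed
  have H2: "phi (r+s) = phi r + phi s \<and> of_int (om m r s) * cc (r+s) = cc r * cc s * of_int (om m (phi r) (phi s))"
    if r: "r \<in> VV m" and s: "s \<in> VV m" and o: "om m r s \<noteq> 0" for r s
  proof -
    have rs: "r + s \<in> VV m" using om_nz[OF o] r s Zn_add by auto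
    have "\<sigma> (wscale (of_int (om m r s)) (hv m (r+s))) = wscale (of_int (om m r s) * cc (r+s)) (hv m (phi (r+s)))"
      using Ssc[OF hv_Hder1[OF rs]] cc_prop[OF rs] by (simp add: wscale_wscale)
    hence e: "wscale (of_int (om m r s) * cc (r+s)) (hv m (phi (r+s))) = wscale (cc r * cc s * of_int (om m (phi r) (phi s))) (hv m (phi r + phi s))"
      using BR[OF r s] by (simp add: wscale_wscale)
    have "phi r + phi s \<in> Zn (2*m)" using H0 r s Zn_add by auto
    moreover have "of_int (om m r s) * cc (r+s) \<noteq> 0" using o Hc[OF rs] by simp
    ultimately have "phi (r+s) = phi r + phi s \<and> of_int (om m r s) * cc (r+s) = cc r * cc s * of_int (om m (phi r) (phi s))"
      using wscale_hv_inj[OF H0[OF rs] _ _ e] by blast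
    thus ?thesis .
  qed
  have H3: "om m (phi r) (phi s) = 0" if r: "r \<in> VV m" and s: "s \<in> VV m" and o: "om m r s = 0" for r s
  proof (cases "phi r + phi s = 0")
    case True
    hence "phi s = - phi r" by (metis add.commute minus_unique)
    thus ?thesis by (simp add: om_neg2 om_self)
  next
    case False
    have e: "wscale (cc r * cc s * of_int (om m (phi r) (phi s))) (hv m (phi r + phi s)) = Z0"
      using BR[OF r s] o SZ0 by (simp add: wscale_wscale wscale_0)
    have "phi r + phi s \<in> VV m" using H0 r s Zn_add False by auto
    from wscale_hv_zero[OF this e] show ?thesis using Hc[OF r] Hc[OF s] by simp
  qed
  have Hinj: "inj_on phi (VV m)"
  proof (rule inj_onI)
    fix x y assume x: "x \<in> VV m" and y: "y \<in> VV m" and e: "phi x = phi y"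
    have "\<sigma> ` kline (hv m x) = \<sigma> ` kline (hv m y)" using phi_prop[OF x] phi_prop[OF y] e by simp
    hence "kline (hv m x) = (kline (hv m y) :: 'k wel set)"
      using inj_on_image_eq_iff[OF Sinj kline_Hder[OF x] kline_Hder[OF y]] by blast
    thus "x = y" by (rule kline_inj[OF x y])
  qed
  have sumS: "\<sigma> (\<lambda>t i. \<Sum>x\<in>F. a x * hv m x t i) = (\<lambda>t i. \<Sum>x\<in>F. a x * cc x * hv m (phi x) t i)"
    if "finite F" "F \<subseteq> VV m" for F a
    using that
  proof (induction F rule: finite_induct)
    case empty then show ?case using SZ0 by simp
  next
    case (insert x F)
    have x: "x \<in> VV m" and F: "F \<subseteq> VV m" using insert.prems by blast+
    have "(\<lambda>t i. \<Sum>y\<in>insert x F. a y * hv m y t i) = wadd (wscale (a x) (hv m x)) (\<lambda>t i. \<Sum>y\<in>F. a y * hv m y t i)"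
      using insert.hyps by (simp add: wadd_def wscale_def)
    hence "\<sigma> (\<lambda>t i. \<Sum>y\<in>insert x F. a y * hv m y t i) = wadd (\<sigma> (wscale (a x) (hv m x))) (\<sigma> (\<lambda>t i. \<Sum>y\<in>F. a y * hv m y t i))"
      using Sadd[OF hv_Hder[OF x] sum_Hder[OF insert.hyps(1) F]] by simp
    also have "\<dots> = wadd (wscale (a x) (wscale (cc x) (hv m (phi x)))) (\<lambda>t i. \<Sum>y\<in>F. a y * cc y * hv m (phi y) t i)"
      using insert.IH[OF F] Ssc[OF hv_Hder1[OF x]] cc_prop[OF x] by simp
    also have "\<dots> = (\<lambda>t i. \<Sum>y\<in>insert x F. a y * cc y * hv m (phi y) t i)"
      using insert.hyps by (simp add: wadd_def wscale_def fun_eq_iff algebra_simps)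
    finally show ?case .
  qed
  have Hsurj: "\<exists>r\<in>VV m. phi r = s" if s: "s \<in> VV m" for s
  proof (rule ccontr)
    assume no: "\<not> (\<exists>r\<in>VV m. phi r = s)"
    have "hv m s \<in> Hder m" by (rule hv_Hder1[OF s])
    hence "hv m s \<in> \<sigma> ` Hder m" unfolding Sim .
    then obtain y where y2: "hv m s = \<sigma> y" and y1: "y \<in> Hder m" by (rule imageE)
    have y: "y \<in> Hder m" "\<sigma> y = hv m s" using y1 y2 by simp_all
    have "\<exists>F a. y = (\<lambda>t i. \<Sum>x\<in>F. a x * hv m x t i) \<and> finite F \<and> F \<subseteq> VV m"
      using y(1) unfolding Hder_def zerov_eq mem_Collect_eq .
    then obtain F a where F: "y = (\<lambda>t i. \<Sum>x\<in>F. a x * hv m x t i)" "finite F" "F \<subseteq> VV m"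
      by (elim exE conjE)
    obtain i where i: "i < 2*m" "rbar m s i \<noteq> 0" using rbar_nz[OF s] by blast
    have "hv m s = (\<lambda>t i. \<Sum>x\<in>F. a x * cc x * hv m (phi x) t i)" using sumS[OF F(2,3)] y(2) F(1) by simp
    hence "hv m s s i = (\<Sum>x\<in>F. a x * cc x * hv m (phi x) s i)" by (simp add: fun_eq_iff)
    also have "\<dots> = 0" using no F(3) by (intro sum.neutral) (auto simp: hv_eq)
    finally have "(of_int (rbar m s i) :: 'k) = 0" using i by (simp add: hv_eq)
    thus False using i by simp
  qed
  have ex: "\<exists>(l :: nat \<Rightarrow> 'k) Q P. (\<forall>i<2*m. l i \<noteq> 0) \<and> Q \<in> GSp m \<and> is_inv (2*m) Q P \<and>
           (\<forall>r\<in>VV m. wscale (cc r) (hv m (phi r)) =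
                (if meq (2*m) (mmul (2*m) (mmul (2*m) (mtr Q) (Jmat m)) Q) (Jmat m)
                 then wscale (lpow (2*m) l r)
                        (Dv (2*m) (ofi (mvec (2*m) (mtr P) (rbar m r))) (mvec (2*m) Q r))
                 else wscale ((-1) powi (vabs (2*m) r) * lpow (2*m) l r)
                        (Dv (2*m) (ofi (mvec (2*m) (mtr P) (rbar m r))) (mvec (2*m) Q r))))"
    by (rule core[of m phi cc, OF m_pos H0 Hc H1 H2 H3 Hinj Hsurj])
  then obtain l Q P where lQP: "(\<forall>i<2*m. l i \<noteq> (0::'k)) \<and> Q \<in> GSp m \<and> is_inv (2*m) Q P \<and>
           (\<forall>r\<in>VV m. wscale (cc r) (hv m (phi r)) =
                (if meq (2*m) (mmul (2*m) (mmul (2*m) (mtr Q) (Jmat m)) Q) (Jmat m)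
                 then wscale (lpow (2*m) l r)
                        (Dv (2*m) (ofi (mvec (2*m) (mtr P) (rbar m r))) (mvec (2*m) Q r))
                 else wscale ((-1) powi (vabs (2*m) r) * lpow (2*m) l r)
                        (Dv (2*m) (ofi (mvec (2*m) (mtr P) (rbar m r))) (mvec (2*m) Q r))))"
    by (elim exE)
  note lQP = conjunct1[OF lQP] conjunct1[OF conjunct2[OF lQP]] conjunct1[OF conjunct2[OF conjunct2[OF lQP]]]
    conjunct2[OF conjunct2[OF conjunct2[OF lQP]]]
  show ?thesis
  proof (rule exI[of _ l], rule exI[of _ Q], rule exI[of _ P], intro conjI)
    show "\<forall>i<2*m. l i \<noteq> 0" "Q \<in> GSp m" "is_inv (2*m) Q P" using lQP(1-3) by auto
    show "\<forall>r\<in>Zn (2*m) - {zerov}.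
              \<sigma> (Dv (2*m) (ofi (rbar m r)) r) =
                (if meq (2*m) (mmul (2*m) (mmul (2*m) (mtr Q) (Jmat m)) Q) (Jmat m)
                 then wscale (lpow (2*m) l r)
                        (Dv (2*m) (ofi (mvec (2*m) (mtr P) (rbar m r))) (mvec (2*m) Q r))
                 else wscale ((-1) powi (vabs (2*m) r) * lpow (2*m) l r)
                        (Dv (2*m) (ofi (mvec (2*m) (mtr P) (rbar m r))) (mvec (2*m) Q r)))"
    proof
      fix r assume "r \<in> Zn (2*m) - {zerov}"
      hence r: "r \<in> VV m" by (simp add: zerov_eq)
      show "\<sigma> (Dv (2*m) (ofi (rbar m r)) r) =
                (if meq (2*m) (mmul (2*m) (mmul (2*m) (mtr Q) (Jmat m)) Q) (Jmat m)
                 then wscale (lpow (2*m) l r)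
                        (Dv (2*m) (ofi (mvec (2*m) (mtr P) (rbar m r))) (mvec (2*m) Q r))
                 else wscale ((-1) powi (vabs (2*m) r) * lpow (2*m) l r)
                        (Dv (2*m) (ofi (mvec (2*m) (mtr P) (rbar m r))) (mvec (2*m) Q r)))"
        unfolding hv_def[symmetric] cc_prop[OF r] using lQP(4) r by (rule bspec)
    qed
  qed
qed

end
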